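(* Let $A$ be a real $n\times n$ matrix, let $\mathbf{y}$ be a symmetric Nash equilibrium of the bimatrix game $(A,A^T)$ (i.e., $(\mathbf{y},\mathbf{y})$ is a Nash equilibrium), and let $D$ be an $n\times n$ diagonal matrix with all diagonal entries positive. Then there exists a probability vector $\mathbf{x}\in\mathbb{R}^n$ such that $(\mathbf{x},\mathbf{y})$ is a Nash equilibrium of the bimatrix game $(A,D)$.
   Context: A bimatrix game $(A,B)$ with $n\times n$ matrices: players choose probability vectors $\mathbf{x},\mathbf{y}\in\mathbb{R}^n$, payoffs $\mathbf{x}^TA\mathbf{y}$ (first player) and $\mathbf{x}^TB\mathbf{y}$ (second player); a Nash equilibrium is a profile where no player gains by unilateral deviation. *)

theory Defs
  imports "HOL-Analysis.Analysis"
begin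

definition prob_vec :: "real ^ 'n::finite \<Rightarrow> bool" where
  "prob_vec x \<longleftrightarrow> (\<forall>i. 0 \<le> x $ i) \<and> (\<Sum>i\<in>UNIV. x $ i) = 1"

definition payoff :: "real ^ 'n::finite \<Rightarrow> real ^ 'n ^ 'n \<Rightarrow> real ^ 'n \<Rightarrow> real" where
  "payoff x M y = x \<bullet> (M *v y)"

definition nash_eq :: "real ^ 'n::finite ^ 'n \<Rightarrow> real ^ 'n ^ 'n \<Rightarrow> real ^ 'n \<Rightarrow> real ^ 'n \<Rightarrow> bool" where
  "nash_eq A B x y \<longleftrightarrow> prob_vec x \<and> prob_vec y \<and>
     (\<forall>x'. prob_vec x' \<longrightarrow> payoff x' A y \<le> payoff x A y) \<and>
     (\<forall>y'. prob_vec y' \<longrightarrow> payoff x B y' \<le> payoff x B y)"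

end

theory Submission
  imports Defs
begin

lemma payoff_sum: "payoff x M y = (\<Sum>i\<in>UNIV. x $ i * (M *v y) $ i)"
  unfolding payoff_def inner_vec_def by simp

lemma diag_mult:
  assumes "\<forall>i j. i \<noteq> j \<longrightarrow> D $ i $ j = 0"
  shows "(D *v y) $ i = D $ i $ i * (y $ i :: real)"
proof -
  have "(D *v y) $ i = (\<Sum>j\<in>UNIV. D $ i $ j * y $ j)"
    by (simp add: matrix_vector_mult_def)
  also have "\<dots> = (\<Sum>j\<in>{i}. D $ i $ j * y $ j)"
    by (rule sum.mono_neutral_right) (use assms in auto)
  finally show ?thesis by simp
qed

theorem theoremA3:
  fixes A D :: "real ^ 'n::finite ^ 'n" and y :: "real ^ 'n"
  assumes "nash_eq A (transpose A) y y"
    and "\<forall>i j. i \<noteq> j \<longrightarrow> D $ i $ j = 0"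
    and "\<forall>i. 0 < D $ i $ i"
  shows "\<exists>x. prob_vec x \<and> nash_eq A D x y"
proof -
  have py: "prob_vec y" and br: "\<And>x'. prob_vec x' \<Longrightarrow> payoff x' A y \<le> payoff y A y"
    using assms(1) unfolding nash_eq_def by auto
  have y0: "\<And>i. 0 \<le> y $ i" and ys: "(\<Sum>i\<in>UNIV. y $ i) = 1"
    using py unfolding prob_vec_def by auto
  define S where "S = {i. 0 < y $ i}"
  have ysS: "(\<Sum>i\<in>S. y $ i) = 1"
    using ys unfolding S_def
    by (subst sum.mono_neutral_left[of UNIV]) (use y0 less_eq_real_def in auto)
  have Sne: "S \<noteq> {}" using ysS by auto
  define d where "d i = D $ i $ i" for i
  have dpos: "\<And>i. 0 < d i" using assms(3) d_def by auto
  define s where "s = (\<Sum>i\<in>S. 1 / d i)"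
  have spos: "0 < s" unfolding s_def using Sne dpos
    by (intro sum_pos) auto
  define c where "c = 1 / s"
  have cpos: "0 < c" using spos c_def by simp
  define x where "x = (\<chi> i. if i \<in> S then c / d i else 0)"
  have x0: "\<And>i. 0 \<le> x $ i" unfolding x_def using cpos dpos by (simp add: less_imp_le)
  have "(\<Sum>i\<in>UNIV. x $ i) = (\<Sum>i\<in>S. x $ i)"
    by (rule sum.mono_neutral_right) (auto simp: x_def)
  also have "\<dots> = (\<Sum>i\<in>S. c * (1 / d i))" by (auto simp: x_def intro!: sum.cong)
  also have "\<dots> = c * s" by (simp add: s_def sum_distrib_left)
  also have "\<dots> = 1" using spos c_def by simp
  finally have px: "prob_vec x" using x0 unfolding prob_vec_def by auto
  define w where "w = A *v y"
  define v where "v = payoff y A y"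
  have wle: "\<And>i. w $ i \<le> v"
  proof -
    fix i
    have "prob_vec (axis i 1 :: real ^ 'n)"
      unfolding prob_vec_def by (simp add: axis_def)
    from br[OF this] show "w $ i \<le> v"
      unfolding v_def w_def payoff_sum by (simp add: axis_def if_distrib[of "\<lambda>t. t * _"] cong: if_cong)
  qed
  have "(\<Sum>i\<in>UNIV. y $ i * (v - w $ i)) = v * (\<Sum>i\<in>UNIV. y $ i) - (\<Sum>i\<in>UNIV. y $ i * w $ i)"
    by (simp add: algebra_simps sum_subtractf sum_distrib_left)
  also have "\<dots> = 0" using ys unfolding v_def w_def payoff_sum by simp
  finally have z: "(\<Sum>i\<in>UNIV. y $ i * (v - w $ i)) = 0" .
  have "\<forall>i\<in>UNIV. y $ i * (v - w $ i) = 0"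
    using sum_nonneg_eq_0_iff[OF finite, of UNIV "\<lambda>i. y $ i * (v - w $ i)"] z y0 wle
    by (simp add: mult_nonneg_nonneg)
  hence wS: "\<And>i. i \<in> S \<Longrightarrow> w $ i = v"
  proof -
    fix i assume "i \<in> S" hence "y $ i \<noteq> 0" unfolding S_def by auto
    with \<open>\<forall>i\<in>UNIV. y $ i * (v - w $ i) = 0\<close> show "w $ i = v" by auto
  qed
  have pxA: "payoff x A y = v"
  proof -
    have "payoff x A y = (\<Sum>i\<in>UNIV. x $ i * v)"
      unfolding payoff_sum w_def[symmetric]
      by (rule sum.cong) (auto simp: x_def wS)
    also have "\<dots> = v" using px unfolding prob_vec_def by (simp add: sum_distrib_right[symmetric])
    finally show ?thesis .
  qed
  have brA: "\<And>x'. prob_vec x' \<Longrightarrow> payoff x' A y \<le> payoff x A y"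
  proof -
    fix x' :: "real ^ 'n" assume p: "prob_vec x'"
    have "payoff x' A y = (\<Sum>i\<in>UNIV. x' $ i * w $ i)" unfolding payoff_sum w_def ..
    also have "\<dots> \<le> (\<Sum>i\<in>UNIV. x' $ i * v)"
      using p wle unfolding prob_vec_def by (intro sum_mono mult_left_mono) auto
    also have "\<dots> = v" using p unfolding prob_vec_def by (simp add: sum_distrib_right[symmetric])
    finally show "payoff x' A y \<le> payoff x A y" using pxA by simp
  qed
  have pD: "\<And>y'. payoff x D y' = c * (\<Sum>i\<in>S. y' $ i)"
  proof -
    fix y' :: "real ^ 'n"
    have "payoff x D y' = (\<Sum>i\<in>UNIV. x $ i * (d i * y' $ i))"
      unfolding payoff_sum d_def using diag_mult[OF assms(2)] by simp
    also have "\<dots> = (\<Sum>i\<in>S. x $ i * (d i * y' $ i))"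
      by (rule sum.mono_neutral_right) (auto simp: x_def)
    also have "\<dots> = (\<Sum>i\<in>S. c * y' $ i)"
      using dpos by (auto simp: x_def intro!: sum.cong) (metis less_irrefl)
    finally show "payoff x D y' = c * (\<Sum>i\<in>S. y' $ i)" by (simp add: sum_distrib_left)
  qed
  have brD: "\<And>y'. prob_vec y' \<Longrightarrow> payoff x D y' \<le> payoff x D y"
  proof -
    fix y' :: "real ^ 'n" assume p: "prob_vec y'"
    have "(\<Sum>i\<in>S. y' $ i) \<le> (\<Sum>i\<in>UNIV. y' $ i)"
      using p unfolding prob_vec_def by (intro sum_mono2) auto
    hence "(\<Sum>i\<in>S. y' $ i) \<le> 1" using p unfolding prob_vec_def by simp
    thus "payoff x D y' \<le> payoff x D y" unfolding pD ysS using cpos by simp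
  qed
  show ?thesis using px py brA brD unfolding nash_eq_def by blast
qed

end
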